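(* Let $G$ be a simple connected graph with $N\ge 2$ nodes. Then $\gamma(G)=1$ if and only if $G$ is a path (linear graph).
   Context: All graphs are simple, undirected and connected. $h_{ij}$ is the shortest-path distance. For an ordered landmark set $\mathcal{M}=\{A_1,\dots,A_m\}\subseteq\mathcal{V}$, $\mathbf{P}_{\mathcal{M}}(i)=\langle h_{iA_1},\dots,h_{iA_m}\rangle$ and $\mathbf{P}_{\mathcal{M}}$ is the matrix with these rows. $\mathcal{M}$ is a construction set of $G$ if $G$ is the unique simple connected graph on $\mathcal{V}$ whose distance vector matrix for landmarks $\mathcal{M}$ equals $\mathbf{P}_{\mathcal{M}}$. The link dimension $\gamma(G)$ is the minimum cardinality of a construction set. *)

theory Defs
  imports Main
begin

definition simple_graph :: "'a set \<Rightarrow> ('a \<Rightarrow> 'a \<Rightarrow> bool) \<Rightarrow> bool" where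
  "simple_graph V E \<longleftrightarrow>
     (\<forall>u v. E u v \<longrightarrow> u \<in> V \<and> v \<in> V) \<and>
     (\<forall>u v. E u v \<longrightarrow> E v u) \<and>
     (\<forall>u. \<not> E u u)"

inductive walk :: "('a \<Rightarrow> 'a \<Rightarrow> bool) \<Rightarrow> nat \<Rightarrow> 'a \<Rightarrow> 'a \<Rightarrow> bool"
  for E :: "'a \<Rightarrow> 'a \<Rightarrow> bool" where
  walk_nil: "walk E 0 u u"
| walk_step: "E u w \<Longrightarrow> walk E n w v \<Longrightarrow> walk E (Suc n) u v"

definition connected_graph :: "'a set \<Rightarrow> ('a \<Rightarrow> 'a \<Rightarrow> bool) \<Rightarrow> bool" where
  "connected_graph V E \<longleftrightarrow> (\<forall>u\<in>V. \<forall>v\<in>V. \<exists>n. walk E n u v)"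

definition simple_connected_graph :: "'a set \<Rightarrow> ('a \<Rightarrow> 'a \<Rightarrow> bool) \<Rightarrow> bool" where
  "simple_connected_graph V E \<longleftrightarrow> simple_graph V E \<and> connected_graph V E"

definition hop :: "('a \<Rightarrow> 'a \<Rightarrow> bool) \<Rightarrow> 'a \<Rightarrow> 'a \<Rightarrow> nat" where
  "hop E u v = (LEAST n. walk E n u v)"

definition dist_vec :: "('a \<Rightarrow> 'a \<Rightarrow> bool) \<Rightarrow> 'a list \<Rightarrow> 'a \<Rightarrow> nat list" where
  "dist_vec E M i = map (hop E i) M"

definition construction_set :: "'a set \<Rightarrow> ('a \<Rightarrow> 'a \<Rightarrow> bool) \<Rightarrow> 'a list \<Rightarrow> bool" where
  "construction_set V E M \<longleftrightarrow>
     M \<noteq> [] \<and> distinct M \<and> set M \<subseteq> V \<and>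
     (\<forall>E'. simple_connected_graph V E' \<and> (\<forall>i\<in>V. dist_vec E' M i = dist_vec E M i)
            \<longrightarrow> E' = E)"

definition link_dim :: "'a set \<Rightarrow> ('a \<Rightarrow> 'a \<Rightarrow> bool) \<Rightarrow> nat" where
  "link_dim V E = (LEAST m. \<exists>M. construction_set V E M \<and> length M = m)"

definition is_path_graph :: "'a set \<Rightarrow> ('a \<Rightarrow> 'a \<Rightarrow> bool) \<Rightarrow> bool" where
  "is_path_graph V E \<longleftrightarrow>
     (\<exists>vs. distinct vs \<and> set vs = V \<and>
        (\<forall>u v. E u v \<longleftrightarrow> (\<exists>i. Suc i < length vs \<and> {u, v} = {vs ! i, vs ! Suc i})))"

end

theory Submission
  imports Defs
begin

lemma walk0: "walk E 0 u v \<Longrightarrow> u = v"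
  by (auto elim: walk.cases)

lemma walk_SucE: "walk E (Suc n) u v \<Longrightarrow> \<exists>w. E u w \<and> walk E n w v"
  by (auto elim: walk.cases)

lemma walk1: "walk E (Suc 0) u v \<longleftrightarrow> E u v"
  by (metis walk0 walk_SucE walk.walk_nil walk.walk_step)

lemma walk_append: "walk E n u v \<Longrightarrow> walk E m v w \<Longrightarrow> walk E (n+m) u w"
  by (induction rule: walk.induct) (auto intro: walk.walk_step)

lemma walk_rev: assumes sym: "\<forall>a b. E a b \<longrightarrow> E b a" shows "walk E n u v \<Longrightarrow> walk E n v u"
proof (induction rule: walk.induct)
  case (walk_nil u) then show ?case by (rule walk.walk_nil)
next
  case (walk_step u w n v)
  have "walk E (Suc 0) w u" using walk_step sym by (simp add: walk1)
  from walk_append[OF walk_step.IH this] show ?case by simp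
qed

lemma connected_via:
  assumes sym: "\<forall>a b. E a b \<longrightarrow> E b a" and w: "\<forall>v\<in>V. \<exists>n. walk E n v A"
  shows "connected_graph V E"
  unfolding connected_graph_def
proof (intro ballI)
  fix u v assume "u \<in> V" "v \<in> V"
  then obtain n m where a: "walk E n u A" and b: "walk E m v A" using w by blast
  have "walk E m A v" using walk_rev[OF sym b] .
  then show "\<exists>n. walk E n u v" using walk_append[OF a] by blast
qed

lemma hop_walk:
  assumes "simple_connected_graph V E" "A \<in> V" "v \<in> V"
  shows "walk E (hop E v A) v A"
  unfolding hop_def
  apply (rule LeastI_ex)
  using assms unfolding simple_connected_graph_def connected_graph_def by blast

lemma hop_le: "walk E n v A \<Longrightarrow> hop E v A \<le> n"
  unfolding hop_def by (rule Least_le)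

lemma hop_props:
  assumes sc: "simple_connected_graph V E" and A: "A \<in> V"
  shows "hop E A A = 0"
    and "\<And>v. v \<in> V \<Longrightarrow> hop E v A = 0 \<Longrightarrow> v = A"
    and "\<And>u v. E u v \<Longrightarrow> hop E u A \<le> hop E v A + 1"
    and "\<And>v. v \<in> V \<Longrightarrow> 0 < hop E v A \<Longrightarrow> \<exists>w. E v w \<and> hop E w A + 1 = hop E v A"
proof -
  have sg: "simple_graph V E" using sc by (simp add: simple_connected_graph_def)
  show "hop E A A = 0" using hop_le[OF walk.walk_nil, of E A] by simp
  show "\<And>v. v \<in> V \<Longrightarrow> hop E v A = 0 \<Longrightarrow> v = A"
    using hop_walk[OF sc A] walk0 by metis
  show le: "\<And>u v. E u v \<Longrightarrow> hop E u A \<le> hop E v A + 1"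
  proof -
    fix u v assume e: "E u v"
    then have "v \<in> V" using sg by (simp add: simple_graph_def)
    then have "walk E (Suc (hop E v A)) u A"
      using hop_walk[OF sc A] e walk.walk_step by metis
    then show "hop E u A \<le> hop E v A + 1" using hop_le by fastforce
  qed
  show "\<And>v. v \<in> V \<Longrightarrow> 0 < hop E v A \<Longrightarrow> \<exists>w. E v w \<and> hop E w A + 1 = hop E v A"
  proof -
    fix v assume v: "v \<in> V" and p: "0 < hop E v A"
    then obtain n where n: "hop E v A = Suc n" using gr0_implies_Suc by blast
    then obtain w where "E v w" "walk E n w A"
      using hop_walk[OF sc A v] walk_SucE by metis
    moreover have "hop E w A \<le> n" using hop_le[OF \<open>walk E n w A\<close>] .
    moreover have "hop E v A \<le> hop E w A + 1" using le[OF \<open>E v w\<close>] .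
    ultimately show "\<exists>w. E v w \<and> hop E w A + 1 = hop E v A" using n by force
  qed
qed

lemma hop_char:
  assumes sg: "simple_graph V E" and A: "A \<in> V" and d0: "d A = 0"
    and z: "\<forall>v\<in>V. d v = 0 \<longrightarrow> v = A"
    and par: "\<forall>v\<in>V. 0 < d v \<longrightarrow> (\<exists>w. E v w \<and> d w + 1 = d v)"
    and lip: "\<forall>u v. E u v \<longrightarrow> d u \<le> d v + 1"
  shows "\<And>v. v \<in> V \<Longrightarrow> walk E (d v) v A" and "\<And>v. v \<in> V \<Longrightarrow> hop E v A = d v"
proof -
  have W: "\<forall>v\<in>V. d v = k \<longrightarrow> walk E k v A" for k
  proof (induction k)
    case 0 then show ?case using z walk.walk_nil by metis
  next
    case (Suc k)
    show ?case
    proof (intro ballI impI)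
      fix v assume v: "v \<in> V" "d v = Suc k"
      then obtain w where w: "E v w" "d w + 1 = d v" using par by fastforce
      then have "w \<in> V" using sg by (simp add: simple_graph_def)
      then have "walk E k w A" using Suc w v by simp
      then show "walk E (Suc k) v A" using w walk.walk_step by metis
    qed
  qed
  show wv: "\<And>v. v \<in> V \<Longrightarrow> walk E (d v) v A" using W by blast
  have lb0: "walk E n v w \<Longrightarrow> w = A \<Longrightarrow> d v \<le> n" for n v w
    by (induction rule: walk.induct) (use d0 lip in force)+
  have lb: "walk E n v A \<Longrightarrow> d v \<le> n" for n v using lb0 by blast
  show "\<And>v. v \<in> V \<Longrightarrow> hop E v A = d v"
  proof -
    fix v assume "v \<in> V"
    show "hop E v A = d v" unfolding hop_def
      by (rule Least_equality) (use wv[OF \<open>v \<in> V\<close>] lb in auto)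
  qed
qed

lemma adj_hop:
  assumes sc: "simple_connected_graph V E"
  shows "E u v \<longleftrightarrow> u \<in> V \<and> v \<in> V \<and> hop E u v = 1"
proof
  have sg: "simple_graph V E" using sc by (simp add: simple_connected_graph_def)
  assume e: "E u v"
  then have uv: "u \<in> V" "v \<in> V" "u \<noteq> v" using sg by (auto simp: simple_graph_def)
  have "walk E 1 u v" using e walk1[of E u v] by simp
  then have "hop E u v \<le> 1" using hop_le by metis
  moreover have "walk E (hop E u v) u v" using hop_walk[OF sc uv(2) uv(1)] by blast
  then have "hop E u v \<noteq> 0" using uv(3) walk0 by metis
  ultimately show "u \<in> V \<and> v \<in> V \<and> hop E u v = 1" using uv by simp
next
  assume h: "u \<in> V \<and> v \<in> V \<and> hop E u v = 1"
  then have "walk E 1 u v" using hop_walk[OF sc, of v u] by simp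
  then show "E u v" using walk1[of E u v] by simp
qed

lemma exists_cs:
  assumes fin: "finite V" and ne: "V \<noteq> {}" and sc: "simple_connected_graph V E"
  shows "\<exists>M. construction_set V E M"
proof -
  obtain xs where xs: "distinct xs" "set xs = V" using finite_distinct_list[OF fin] by blast
  have "construction_set V E xs"
    unfolding construction_set_def
  proof (intro conjI allI impI)
    show "xs \<noteq> []" using xs ne by auto
    show "distinct xs" "set xs \<subseteq> V" using xs by auto
    fix E' assume a: "simple_connected_graph V E' \<and> (\<forall>i\<in>V. dist_vec E' xs i = dist_vec E xs i)"
    then have "\<forall>i\<in>V. \<forall>j\<in>V. hop E' i j = hop E i j"
      using xs by (auto simp: dist_vec_def map_eq_conv)
    then show "E' = E" using adj_hop[OF sc] adj_hop[of V E'] a by (intro ext) (metis (full_types))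
  qed
  then show ?thesis by blast
qed


lemma path_imp:
  assumes fin: "finite V" and c2: "card V \<ge> 2" and sc: "simple_connected_graph V E"
    and pg: "is_path_graph V E"
  shows "link_dim V E = 1"
proof -
  have sg: "simple_graph V E" using sc by (simp add: simple_connected_graph_def)
  obtain vs where vs: "distinct vs" "set vs = V"
    and ed: "\<And>u v. E u v \<longleftrightarrow> (\<exists>i. Suc i < length vs \<and> {u, v} = {vs ! i, vs ! Suc i})"
    using pg unfolding is_path_graph_def by blast
  have len: "length vs = card V" using distinct_card[OF vs(1)] vs(2) by simp
  with c2 have len2: "length vs \<ge> 2" by simp
  define d where "d v = (THE i. i < length vs \<and> vs ! i = v)" for v
  have dn: "d (vs ! i) = i" if "i < length vs" for i
    unfolding d_def
    by (rule the_equality) (use that vs(1) nth_eq_iff_index_eq in auto)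
  have inV: "\<exists>i<length vs. v = vs ! i" if "v \<in> V" for v
    using that vs(2) by (auto simp: in_set_conv_nth)
  define A where "A = vs ! 0"
  have "0 < length vs" using len2 by linarith
  then have A: "A \<in> V" unfolding A_def using vs(2) nth_mem by blast
  have nthV: "vs ! i \<in> V" if "i < length vs" for i using that vs(2) by auto
  have key: "E' = E" if sc': "simple_connected_graph V E'"
      and hv: "\<forall>v\<in>V. hop E' v A = d v" for E'
  proof (intro ext iffI)
    have sg': "simple_graph V E'" using sc' by (simp add: simple_connected_graph_def)
    note hp = hop_props[OF sc' A]
    fix u v
    {
      assume e: "E' u v"
      then have uv: "u \<in> V" "v \<in> V" "u \<noteq> v" using sg' by (auto simp: simple_graph_def)
      obtain i j where ij: "i < length vs" "j < length vs" "u = vs ! i" "v = vs ! j"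
        using inV uv by metis
      have "i \<le> j + 1" using hp(3)[OF e] hv uv ij dn by simp
      moreover have "E' v u" using e sg' by (simp add: simple_graph_def)
      then have "j \<le> i + 1" using hp(3) hv uv ij dn by force
      moreover have "i \<noteq> j" using uv ij by auto
      ultimately have "j = Suc i \<or> i = Suc j" by auto
      then show "E u v"
      proof
        assume "j = Suc i" then show ?thesis using ed ij by auto
      next
        assume "i = Suc j" then show ?thesis using ed ij by (auto simp: insert_commute)
      qed
    }
    {
      assume e: "E u v"
      then obtain i where i: "Suc i < length vs" "{u, v} = {vs ! i, vs ! Suc i}" using ed by blast
      have "0 < hop E' (vs ! Suc i) A" using hv nthV[OF i(1)] dn[OF i(1)] by simp
      then obtain w where w: "E' (vs ! Suc i) w" "hop E' w A + 1 = hop E' (vs ! Suc i) A"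
        using hp(4) nthV[OF i(1)] by blast
      then have wV: "w \<in> V" using sg' by (simp add: simple_graph_def)
      then obtain k where k: "k < length vs" "w = vs ! k" using inV by blast
      have "k = i" using w(2) hv wV nthV[OF i(1)] dn[OF i(1)] dn[OF k(1)] k by simp
      then have e1: "E' (vs ! Suc i) (vs ! i)" using w k by simp
      then have e2: "E' (vs ! i) (vs ! Suc i)" using sg' by (simp add: simple_graph_def)
      from i(2) show "E' u v" using e1 e2 by (auto simp: doubleton_eq_iff)
    }
  qed
  have hE: "\<forall>v\<in>V. hop E v A = d v"
  proof -
    have "\<And>v. v \<in> V \<Longrightarrow> hop E v A = d v"
    proof (rule hop_char(2)[OF sg A])
      show "d A = 0" using dn[of 0] \<open>0 < length vs\<close> A_def by simp
      show "\<forall>v\<in>V. d v = 0 \<longrightarrow> v = A" using inV dn A_def by force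
      show "\<forall>v\<in>V. 0 < d v \<longrightarrow> (\<exists>w. E v w \<and> d w + 1 = d v)"
      proof (intro ballI impI)
        fix v assume "v \<in> V" "0 < d v"
        then obtain i where i: "i < length vs" "v = vs ! i" "0 < i" using inV dn by force
        then obtain j where j: "i = Suc j" using gr0_implies_Suc by blast
        have "E v (vs ! j)" using ed i j by (auto simp: insert_commute)
        moreover have "d (vs ! j) + 1 = d v" using dn i j by simp
        ultimately show "\<exists>w. E v w \<and> d w + 1 = d v" by blast
      qed
      show "\<forall>u v. E u v \<longrightarrow> d u \<le> d v + 1"
      proof (intro allI impI)
        fix u v assume "E u v"
        then obtain i where i: "Suc i < length vs" "{u, v} = {vs ! i, vs ! Suc i}" using ed by blast
        then show "d u \<le> d v + 1" using dn[OF i(1)] dn[of i] by (auto simp: doubleton_eq_iff)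
      qed
    qed
    then show ?thesis by blast
  qed
  have cs: "construction_set V E [A]"
    unfolding construction_set_def
  proof (intro conjI allI impI)
    show "[A] \<noteq> []" "distinct [A]" "set [A] \<subseteq> V" using A by auto
    fix E' assume a: "simple_connected_graph V E' \<and> (\<forall>i\<in>V. dist_vec E' [A] i = dist_vec E [A] i)"
    then have "\<forall>v\<in>V. hop E' v A = d v" using hE by (auto simp: dist_vec_def)
    then show "E' = E" using key a by blast
  qed
  show ?thesis unfolding link_dim_def
  proof (rule Least_equality)
    show "\<exists>M. construction_set V E M \<and> length M = 1" using cs by force
    fix m assume "\<exists>M. construction_set V E M \<and> length M = m"
    then show "1 \<le> m" by (auto simp: construction_set_def Suc_le_eq)
  qed
qed


lemma one_imp_path:
  assumes fin: "finite V" and c2: "card V \<ge> 2" and sc: "simple_connected_graph V E"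
    and ld: "link_dim V E = 1"
  shows "is_path_graph V E"
proof -
  have sg: "simple_graph V E" using sc by (simp add: simple_connected_graph_def)
  have ne: "V \<noteq> {}" using c2 by auto
  obtain M0 where "construction_set V E M0" using exists_cs[OF fin ne sc] by blast
  then have "\<exists>M. construction_set V E M \<and> length M = link_dim V E"
    unfolding link_dim_def
    using LeastI_ex[where P="\<lambda>m. \<exists>M. construction_set V E M \<and> length M = m"] by blast
  then obtain M where M: "construction_set V E M" "length M = 1" using ld by auto
  then obtain A where MA: "M = [A]" by (cases M) auto
  have A: "A \<in> V" using M MA by (simp add: construction_set_def)
  have uniq: "E' = E" if "simple_connected_graph V E'" "\<forall>v\<in>V. hop E' v A = hop E v A" for E'
    using M(1) MA that by (simp add: construction_set_def dist_vec_def)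
  define d where "d v = hop E v A" for v
  note hp = hop_props[OF sc A, folded d_def]
  have par: "\<forall>v\<in>V. 0 < d v \<longrightarrow> (\<exists>w. E v w \<and> d w + 1 = d v)" using hp(4) by blast
  have lip: "\<forall>u v. E u v \<longrightarrow> d u \<le> d v + 1" using hp(3) by blast
  show ?thesis
  proof (cases "inj_on d V")
    case False
    then obtain u w where uw: "u \<in> V" "w \<in> V" "u \<noteq> w" "d u = d w"
      unfolding inj_on_def by blast
    define E' where "E' a b = ((E a b \<and> {a, b} \<noteq> {u, w}) \<or> (\<not> E u w \<and> {a, b} = {u, w}))" for a b
    have sg': "simple_graph V E'"
      using sg uw unfolding simple_graph_def E'_def by (auto simp: doubleton_eq_iff)
    have sym': "\<forall>a b. E' a b \<longrightarrow> E' b a" using sg' by (simp add: simple_graph_def)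
    have par': "\<forall>v\<in>V. 0 < d v \<longrightarrow> (\<exists>x. E' v x \<and> d x + 1 = d v)"
    proof (intro ballI impI)
      fix v assume "v \<in> V" "0 < d v"
      then obtain x where x: "E v x" "d x + 1 = d v" using par by blast
      have "{v, x} \<noteq> {u, w}" using x uw by (auto simp: doubleton_eq_iff)
      then show "\<exists>x. E' v x \<and> d x + 1 = d v" using x unfolding E'_def by blast
    qed
    have lip': "\<forall>a b. E' a b \<longrightarrow> d a \<le> d b + 1"
      using lip uw unfolding E'_def by (auto simp: doubleton_eq_iff)
    have z: "\<forall>v\<in>V. d v = 0 \<longrightarrow> v = A" using hp(2) by blast
    note hc = hop_char[OF sg' A hp(1) z par' lip']
    have sc': "simple_connected_graph V E'"
      unfolding simple_connected_graph_def
      using sg' connected_via[OF sym', of V A] hc(1) by blast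
    have "E' = E" using uniq[OF sc'] hc(2) d_def by simp
    moreover have "E' u w \<noteq> E u w" unfolding E'_def by auto
    ultimately show ?thesis by simp
  next
    case True
    define S where "S = d ` V"
    define N where "N = card V"
    have cS: "card S = N" using card_image[OF True] S_def N_def by simp
    have down: "\<forall>j\<le>k. j \<in> S" if "k \<in> S" for k
      using that
    proof (induction k)
      case 0 then show ?case by simp
    next
      case (Suc k)
      then obtain v where v: "v \<in> V" "d v = Suc k" using S_def by auto
      then obtain x where x: "E v x" "d x + 1 = d v" using par by force
      then have "x \<in> V" using sg by (simp add: simple_graph_def)
      then have "k \<in> S" using x v S_def by force
      then show ?case using Suc.IH Suc.prems le_Suc_eq by blast
    qed
    have SN: "S = {0..<N}"
    proof -
      have "S \<subseteq> {0..<N}"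
      proof
        fix k assume k: "k \<in> S"
        show "k \<in> {0..<N}"
        proof (rule ccontr)
          assume "k \<notin> {0..<N}"
          then have "{0..<N+1} \<subseteq> S" using down[OF k] by auto
          then have "card {0..<N+1} \<le> card S"
            using card_mono fin S_def by (metis finite_imageI)
          then show False using cS by simp
        qed
      qed
      then show ?thesis using cS by (simp add: card_subset_eq)
    qed
    define f where "f = the_inv_into V d"
    have fV: "f i \<in> V" and df: "d (f i) = i" if "i < N" for i
      using that SN S_def True the_inv_into_into[OF True] f_the_inv_into_f[OF True]
      unfolding f_def by auto
    have fd: "f (d v) = v" if "v \<in> V" for v
      using the_inv_into_f_f[OF True that] f_def by simp
    have dlt: "d v < N" if "v \<in> V" for v using that SN S_def by auto
    define vs where "vs = map f [0..<N]"
    have lvs: "length vs = N" using vs_def by simp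
    have vsn: "vs ! i = f i" if "i < N" for i using that vs_def by simp
    show ?thesis unfolding is_path_graph_def
    proof (intro exI conjI allI)
      show "distinct vs" unfolding vs_def distinct_map
        by (auto simp: inj_on_def) (metis df)
      show "set vs = V"
      proof
        show "set vs \<subseteq> V" using fV vs_def by auto
        show "V \<subseteq> set vs"
        proof
          fix v assume "v \<in> V"
          then show "v \<in> set vs" using fd[of v] dlt[of v] vs_def by force
        qed
      qed
      fix a b
      show "E a b \<longleftrightarrow> (\<exists>i. Suc i < length vs \<and> {a, b} = {vs ! i, vs ! Suc i})"
      proof
        assume e: "E a b"
        then have ab: "a \<in> V" "b \<in> V" "a \<noteq> b" "E b a" using sg by (auto simp: simple_graph_def)
        have "d a \<noteq> d b" using True ab by (auto simp: inj_on_def)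
        moreover have "d a \<le> d b + 1" "d b \<le> d a + 1" using lip e ab by auto
        ultimately have "d b = Suc (d a) \<or> d a = Suc (d b)" by auto
        then show "\<exists>i. Suc i < length vs \<and> {a, b} = {vs ! i, vs ! Suc i}"
        proof
          assume h: "d b = Suc (d a)"
          then have "Suc (d a) < length vs" using dlt ab lvs by metis
          moreover have "{a, b} = {vs ! d a, vs ! Suc (d a)}"
            using h vsn fd ab dlt by (metis Suc_lessD calculation lvs)
          ultimately show ?thesis by blast
        next
          assume h: "d a = Suc (d b)"
          then have "Suc (d b) < length vs" using dlt ab lvs by metis
          moreover have "{a, b} = {vs ! d b, vs ! Suc (d b)}"
            using h vsn fd ab dlt by (metis Suc_lessD calculation lvs insert_commute)
          ultimately show ?thesis by blast
        qed
      next
        assume "\<exists>i. Suc i < length vs \<and> {a, b} = {vs ! i, vs ! Suc i}"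
        then obtain i where i: "Suc i < N" "{a, b} = {f i, f (Suc i)}" using vsn lvs by auto
        have "0 < d (f (Suc i))" using df[OF i(1)] by simp
        then obtain x where x: "E (f (Suc i)) x" "d x + 1 = d (f (Suc i))"
          using par fV[OF i(1)] by blast
        then have "x \<in> V" using sg by (simp add: simple_graph_def)
        moreover have "d x = i" using x df[OF i(1)] by simp
        ultimately have "x = f i" using fd by metis
        then have e1: "E (f (Suc i)) (f i)" using x by simp
        then have e2: "E (f i) (f (Suc i))" using sg by (simp add: simple_graph_def)
        show "E a b" using i(2) e1 e2 by (auto simp: doubleton_eq_iff)
      qed
    qed
  qed
qed

theorem proposition1:
  fixes V :: "'a set" and E :: "'a \<Rightarrow> 'a \<Rightarrow> bool"
  assumes "finite V" and "card V \<ge> 2" and "simple_connected_graph V E"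
  shows "link_dim V E = 1 \<longleftrightarrow> is_path_graph V E"
  using one_imp_path[OF assms] path_imp[OF assms] by blast

end
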